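(* For every $n\geq1$ and every $0<\alpha\leq 2$, $d_\alpha$ is a homogeneous distance on $\mathbb H^n$.
   Context: $\mathbb H^n=\mathbb R^{2n+1}=\{(x,y,z): x,y\in\mathbb R^n, z\in\mathbb R\}$ with the Euclidean topology and group law $(x,y,z)\cdot(x',y',z')=(x+x',y+y',z+z'+\tfrac12\langle x,y'\rangle-\tfrac12\langle y,x'\rangle)$. Dilations: $\delta_\lambda(x,y,z)=(\lambda x,\lambda y,\lambda^2 z)$. $B_\alpha$ is the closed Euclidean ball of radius $\alpha$ centered at $0$ in $\mathbb R^{2n+1}$, and $d_\alpha(p,q)=\inf\{r>0:\delta_{1/r}(p^{-1}\cdot q)\in B_\alpha\}$. A distance $d$ on $\mathbb H^n$ is homogeneous if it induces the Euclidean topology, is left invariant ($d(p\cdot q,p\cdot q')=d(q,q')$) and satisfies $d(\delta_\lambda p,\delta_\lambda q)=\lambda d(p,q)$ for all $\lambda>0$. *)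

theory Defs
  imports "HOL-Analysis.Analysis"
begin

text \<open>Heisenberg group H^n modelled on R^n x R^n x R; the dimension n is the
cardinality of the finite index type 'n (so n >= 1 automatically).  The norm on the
product type is the Euclidean norm of R^(2n+1) and its topology is the Euclidean one.\<close>

type_synonym 'n heis = "(real^'n) \<times> (real^'n) \<times> real"

definition hmult :: "'n::finite heis \<Rightarrow> 'n heis \<Rightarrow> 'n heis" where
  "hmult p q = (case p of (x, y, z) \<Rightarrow> case q of (x', y', z') \<Rightarrow>
     (x + x', y + y', z + z' + (1/2) * (x \<bullet> y') - (1/2) * (y \<bullet> x')))"

definition hinv :: "'n::finite heis \<Rightarrow> 'n heis" where
  "hinv p = (case p of (x, y, z) \<Rightarrow> (-x, -y, -z))"

definition hdil :: "real \<Rightarrow> 'n::finite heis \<Rightarrow> 'n heis" where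
  "hdil l p = (case p of (x, y, z) \<Rightarrow> (l *\<^sub>R x, l *\<^sub>R y, l^2 * z))"

definition d_alpha :: "real \<Rightarrow> 'n::finite heis \<Rightarrow> 'n heis \<Rightarrow> real" where
  "d_alpha a p q = Inf {r. r > 0 \<and> hdil (1/r) (hmult (hinv p) q) \<in> cball 0 a}"

definition homogeneous_distance :: "('n::finite heis \<Rightarrow> 'n heis \<Rightarrow> real) \<Rightarrow> bool" where
  "homogeneous_distance d \<longleftrightarrow>
     (\<forall>p q. d p q = 0 \<longleftrightarrow> p = q) \<and>
     (\<forall>p q. d p q = d q p) \<and>
     (\<forall>p q r. d p r \<le> d p q + d q r) \<and>
     (\<forall>U. open U \<longleftrightarrow> (\<forall>p\<in>U. \<exists>e>0. \<forall>q. d p q < e \<longrightarrow> q \<in> U)) \<and>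
     (\<forall>p q q'. d (hmult p q) (hmult p q') = d q q') \<and>
     (\<forall>l p q. l > 0 \<longrightarrow> d (hdil l p) (hdil l q) = l * d p q)"

end

theory Submission
  imports Defs
begin



lemma hmult_simp: "hmult (x,y,z) (x',y',z') = (x + x', y + y', z + z' + (1/2) * (x \<bullet> y') - (1/2) * (y \<bullet> x'))"
  by (simp add: hmult_def)
lemma hinv_simp: "hinv (x,y,z) = (-x,-y,-z)" by (simp add: hinv_def)
lemma hdil_simp: "hdil l (x,y,z) = (l *\<^sub>R x, l *\<^sub>R y, l^2 * z)" by (simp add: hdil_def)

lemma heis_eq0: "hmult (hinv p) q = (0,0,0) \<longleftrightarrow> p = q"
  apply (cases p; cases q)
  apply (auto simp: hmult_simp hinv_simp inner_commute)
  done

lemma heis_sym: "hinv (hmult (hinv p) q) = hmult (hinv q) p"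
  by (cases p; cases q) (simp add: hmult_simp hinv_simp inner_commute algebra_simps)

lemma heis_tri: "hmult (hinv p) r = hmult (hmult (hinv p) q) (hmult (hinv q) r)"
  by (cases p; cases q; cases r) (simp add: hmult_simp hinv_simp inner_commute algebra_simps inner_simps)

lemma heis_left: "hmult (hinv (hmult p q)) (hmult p q') = hmult (hinv q) q'"
  by (cases p; cases q; cases q') (simp add: hmult_simp hinv_simp inner_commute algebra_simps inner_simps)

lemma heis_dil: "hmult (hinv (hdil l p)) (hdil l q) = hdil l (hmult (hinv p) q)"
  by (cases p; cases q) (simp add: hmult_simp hinv_simp hdil_simp inner_commute algebra_simps inner_simps power2_eq_square)

lemma hdil_mult: "hdil l (hmult p q) = hmult (hdil l p) (hdil l q)"
  by (cases p; cases q) (simp add: hmult_simp hdil_simp inner_commute algebra_simps inner_simps power2_eq_square)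

lemma hdil_hdil: "hdil l (hdil m p) = hdil (l*m) p"
  by (cases p) (simp add: hdil_simp power_mult_distrib)

lemma hdil_hinv: "hdil l (hinv p) = hinv (hdil l p)"
  by (cases p) (simp add: hdil_simp hinv_simp)

lemma norm_heis2: "(norm ((x,y,z)::'n::finite heis))^2 = norm x^2 + norm y^2 + z^2"
  by (simp add: norm_Pair)

lemma norm_hinv: "norm (hinv p) = norm p"
  by (cases p) (simp add: hinv_simp norm_Pair)




definition Nh :: "real \<Rightarrow> 'n::finite heis \<Rightarrow> real" where
  "Nh a p = (case p of (x,y,z) \<Rightarrow>
     sqrt ((norm x^2 + norm y^2 + sqrt ((norm x^2 + norm y^2)^2 + 4*a^2*z^2)) / (2*a^2)))"

lemma cball_char:
  fixes x y :: "real^'n::finite"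
  assumes r: "r > 0" and a: "a > 0"
  shows "hdil (1/r) (x,y,z) \<in> cball 0 a \<longleftrightarrow> (norm x^2 + norm y^2)*r^2 + z^2 \<le> a^2*r^4"
proof -
  have "hdil (1/r) (x,y,z) \<in> cball 0 a \<longleftrightarrow> norm (hdil (1/r) (x,y,z)) ^2 \<le> a^2"
    using a by (simp add: abs_le_square_iff[symmetric])
  also have "norm (hdil (1/r) (x,y,z)) ^2 = (norm x^2 + norm y^2)/r^2 + z^2/r^4"
    by (simp only: hdil_simp norm_heis2) (simp add: power_divide power_mult_distrib add_divide_distrib)
  also have "((norm x^2 + norm y^2)/r^2 + z^2/r^4 \<le> a^2) \<longleftrightarrow> (norm x^2 + norm y^2)*r^2 + z^2 \<le> a^2*r^4"
  proof -
    have "(norm x^2 + norm y^2)/r^2 + z^2/r^4 = ((norm x^2 + norm y^2)*r^2 + z^2) / r^4"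
      using r by (simp add: field_simps power_def)
    then show ?thesis using r by (simp add: divide_le_eq)
  qed
  finally show ?thesis .
qed

lemma Nh_char:
  fixes x y :: "real^'n::finite"
  assumes r: "r > 0" and a: "a > 0"
  shows "Nh a (x,y,z) \<le> r \<longleftrightarrow> (norm x^2 + norm y^2)*r^2 + z^2 \<le> a^2*r^4"
proof -
  define A where "A = norm x^2 + norm y^2"
  define \<rho> where "\<rho> = r^2"
  have A0: "A \<ge> 0" unfolding A_def by simp
  have \<rho>0: "\<rho> > 0" using r unfolding \<rho>_def by simp
  have S0: "sqrt (A^2 + 4*a^2*z^2) \<ge> 0" by simp
  have Q0: "(A + sqrt (A^2 + 4*a^2*z^2)) / (2*a^2) \<ge> 0" using A0 S0 by simp
  have "Nh a (x,y,z) \<le> r \<longleftrightarrow> (A + sqrt (A^2 + 4*a^2*z^2)) / (2*a^2) \<le> \<rho>"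
    unfolding Nh_def A_def \<rho>_def using Q0 r
    by (simp add: A_def real_sqrt_le_iff')
  also have "\<dots> \<longleftrightarrow> sqrt (A^2 + 4*a^2*z^2) \<le> 2*a^2*\<rho> - A"
    using a by (simp add: divide_le_eq algebra_simps)
  also have "\<dots> \<longleftrightarrow> A*\<rho> + z^2 \<le> a^2*\<rho>^2"
  proof
    assume h: "sqrt (A^2 + 4*a^2*z^2) \<le> 2*a^2*\<rho> - A"
    have K: "2*a^2*\<rho> - A \<ge> 0" using h S0 by linarith
    have "A^2 + 4*a^2*z^2 \<le> (2*a^2*\<rho> - A)^2" using h K sqrt_le_D by blast
    then have "4*a^2*(A*\<rho> + z^2) \<le> 4*a^2*(a^2*\<rho>^2)" by (simp add: power2_eq_square algebra_simps)
    then have X: "a^2*(A*\<rho> + z^2) \<le> a^2*(a^2*\<rho>^2)" by (simp only: mult.assoc[symmetric])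
    show "A*\<rho> + z^2 \<le> a^2*\<rho>^2" by (rule mult_left_le_imp_le[OF X]) (use a in simp)
  next
    assume h: "A*\<rho> + z^2 \<le> a^2*\<rho>^2"
    have "A*\<rho> \<le> a^2*\<rho>^2" using h zero_le_power2[of z] by linarith
    then have "A*\<rho> \<le> a^2*\<rho>*\<rho>" by (simp add: power2_eq_square algebra_simps)
    then have "A \<le> a^2*\<rho>" using \<rho>0 by simp
    then have K: "2*a^2*\<rho> - A \<ge> 0" proof -
      have "a^2*\<rho> > 0" using a \<rho>0 by simp
      then show ?thesis using \<open>A \<le> a^2*\<rho>\<close> by linarith
    qed
    have "4*a^2*(A*\<rho> + z^2) \<le> 4*a^2*(a^2*\<rho>^2)" using h a by (intro mult_left_mono) auto
    then have "A^2 + 4*a^2*z^2 \<le> (2*a^2*\<rho> - A)^2" by (simp add: power2_eq_square algebra_simps)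
    then show "sqrt (A^2 + 4*a^2*z^2) \<le> 2*a^2*\<rho> - A" using K real_le_lsqrt by blast
  qed
  finally have "Nh a (x,y,z) \<le> r \<longleftrightarrow> A*\<rho> + z^2 \<le> a^2*\<rho>^2" .
  moreover have "(r^2)^2 = r^4" by simp
  ultimately show ?thesis unfolding A_def \<rho>_def by (simp add: algebra_simps)
qed




lemma F_bound:
  fixes ii ww A A' b c a :: real
  assumes E1: "2 * ii + ww^2 \<le> A + A'" and h1: "A + b^2 \<le> a^2" and h2: "A' + c^2 \<le> a^2"
  shows "2 * (ii + b * c - a^2) + 2 * b * (ww - b - c) + (ww - b - c)^2/4 \<le> 0"
proof -
  have "2 * ii - 2 * a^2 \<le> (-(b^2)) - c^2 - ww^2" using E1 h1 h2 by linarith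
  moreover have "- (ww^2) - 3 * b^2 - c^2 + 2 * b * ww + (ww - b - c)^2/4
     = -(3 * (ww - b + c/3)^2 + 8 * b^2 + 8/3 * c^2)/4"
    by (simp add: power2_eq_square field_simps)
  moreover have "3 * (ww - b + c/3)^2 + 8 * b^2 + 8/3 * c^2 \<ge> 0" by simp
  moreover have "2 * (ii + b * c - a^2) + 2 * b * (ww - b - c) + (ww - b - c)^2/4
       = (2 * ii - 2 * a^2) + 2 * b * ww - 2 * b^2 + (ww - b - c)^2/4"
    by (simp add: algebra_simps power2_eq_square)
  ultimately show ?thesis by argo
qed



lemma E1_bound:
  fixes ii ww A A' :: real
  assumes A0: "A \<ge> 0" and A0': "A' \<ge> 0" and CS: "ii^2 + 4 * ww^2 \<le> A * A'"
    and A4: "A \<le> 4" and A4': "A' \<le> 4"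
  shows "2 * ii + ww^2 \<le> A + A'"
proof -
  define g where "g = sqrt (A * A')"
  have g0: "g \<ge> 0" unfolding g_def using A0 A0' by simp
  have gsq: "g^2 = A * A'" unfolding g_def using A0 A0' by simp
  have "A * A' \<le> 4 * 4" using A0 A0' A4 A4' by (intro mult_mono) auto
  then have g4: "g \<le> 4" unfolding g_def by (intro real_le_lsqrt) auto
  have "ii^2 \<le> g^2" using CS gsq zero_le_power2[of ww] by linarith
  then have Ig: "\<bar>ii\<bar> \<le> g" using g0 by (metis abs_le_square_iff abs_of_nonneg)
  then have Ig1: "g - ii \<ge> 0" "g + ii \<le> 8" using g4 by (simp_all add: abs_le_iff)
  have "4 * A * A' \<le> (A+A')^2" using sum_squares_ge_zero[of "A-A'" 0] by (simp add: power2_eq_square algebra_simps)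
  moreover have "(2 * g)^2 = 4 * A * A'" using gsq by (simp add: power_mult_distrib)
  ultimately have "(2 * g)^2 \<le> (A+A')^2" by simp
  moreover have "A + A' \<ge> 0" using A0 A0' by simp
  ultimately have gA: "2 * g \<le> A + A'" by (rule power2_le_imp_le)
  have "4 * ww^2 \<le> g^2 - ii^2" using CS gsq by linarith
  also have "\<dots> = (g - ii) * (g + ii)" by (simp add: power2_eq_square algebra_simps)
  also have "\<dots> \<le> (g - ii) * 8" using Ig1 by (intro mult_left_mono) simp_all
  finally have "ww^2 \<le> 2 * (g - ii)" by simp
  then show ?thesis using gA by argo
qed



lemma scal:
  fixes A A' ii ww b c a ss tt :: real
  assumes A0: "A \<ge> 0" and A0': "A' \<ge> 0" and CS: "ii^2 + 4 * ww^2 \<le> A * A'"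
    and h1: "A + b^2 \<le> a^2" and h2: "A' + c^2 \<le> a^2" and a0: "0 < a" and a2: "a \<le> 2"
    and s0: "ss \<ge> 0" and t0: "tt \<ge> 0" and st: "ss + tt = 1"
  shows "ss^2 * A + tt^2 * A' + 2 * ss * tt * ii + (ss^2 * b + tt^2 * c + ss * tt * ww)^2 \<le> a^2"
proof -
  have a4: "a^2 \<le> 4" using a0 a2 by (metis less_eq_real_def power_mono power2_eq_square zero_le_numeral numeral_times_numeral semiring_norm(12) num_double)
  have A4: "A \<le> 4" "A' \<le> 4" using h1 h2 a4 zero_le_power2[of b] zero_le_power2[of c] by linarith+
  have E1: "2 * ii + ww^2 \<le> A + A'" by (rule E1_bound[OF A0 A0' CS A4])
  define D where "D = ww - b - c"
  define m where "m = ss * b + tt * c"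
  have F1: "2 * (ii + b * c - a^2) + 2 * b * D + D^2/4 \<le> 0"
    unfolding D_def by (rule F_bound[OF E1 h1 h2])
  have F2: "2 * (ii + b * c - a^2) + 2 * c * D + D^2/4 \<le> 0"
  proof -
    have E1': "2 * ii + ww^2 \<le> A' + A" using E1 by linarith
    have "2 * (ii + c * b - a^2) + 2 * c * (ww - c - b) + (ww - c - b)^2/4 \<le> 0"
      by (rule F_bound[OF E1' h2 h1])
    then show ?thesis unfolding D_def by (simp add: algebra_simps)
  qed
  have tt: "tt = 1 - ss" using st by simp
  have Z: "ss^2 * b + tt^2 * c + ss * tt * ww = m + ss * tt * D"
    unfolding m_def D_def tt by (simp add: power2_eq_square algebra_simps)
  have "ss^2 * A + tt^2 * A' + 2 * ss * tt * ii + (ss^2 * b + tt^2 * c + ss * tt * ww)^2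
     = ss^2 * (A+b^2) + tt^2 * (A'+c^2) + 2 * ss * tt * (ii + b * c) + 2 * ss * tt * m * D + ss^2 * tt^2 * D^2"
    unfolding Z m_def by (simp add: power2_eq_square algebra_simps)
  also have "\<dots> \<le> ss^2 * a^2 + tt^2 * a^2 + 2 * ss * tt * (ii + b * c) + 2 * ss * tt * m * D + ss^2 * tt^2 * D^2"
  proof -
    have "ss^2 * (A+b^2) \<le> ss^2 * a^2" using h1 by (intro mult_left_mono) auto
    moreover have "tt^2 * (A'+c^2) \<le> tt^2 * a^2" using h2 by (intro mult_left_mono) auto
    ultimately show ?thesis by argo
  qed
  also have "\<dots> = a^2 + ss * tt * (2 * (ii + b * c - a^2) + 2 * m * D + ss * tt * D^2)"
    unfolding tt by (simp add: power2_eq_square algebra_simps)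
  also have "\<dots> \<le> a^2 + ss * tt * (2 * (ii + b * c - a^2) + 2 * m * D + D^2/4)"
  proof -
    have "4 * (ss * tt) \<le> 1" unfolding tt using sum_squares_ge_zero[of "2 * ss-1" 0] by (simp add: power2_eq_square algebra_simps)
    then have "ss * tt * D^2 \<le> D^2/4" using zero_le_power2[of D] by (simp add: mult_right_mono[of "ss * tt" "1/4" "D^2", simplified] )
    then show ?thesis using s0 t0 by (intro add_left_mono mult_left_mono) auto
  qed
  finally have fin: "ss^2 * A + tt^2 * A' + 2 * ss * tt * ii + (ss^2 * b + tt^2 * c + ss * tt * ww)^2 \<le> a^2 + ss * tt * (2 * (ii + b * c - a^2) + 2 * m * D + D^2/4)" .
  have "2 * (ii + b * c - a^2) + 2 * m * D + D^2/4
      = ss * (2 * (ii + b * c - a^2) + 2 * b * D + D^2/4) + tt * (2 * (ii + b * c - a^2) + 2 * c * D + D^2/4)"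
    unfolding m_def tt by (simp add: field_simps)
  also have "ss * (2 * (ii + b * c - a^2) + 2 * b * D + D^2/4) + tt * (2 * (ii + b * c - a^2) + 2 * c * D + D^2/4) \<le> 0"
    using F1 F2 s0 t0 by (simp add: add_nonpos_nonpos mult_nonneg_nonpos)
  finally have "2 * (ii + b * c - a^2) + 2 * m * D + D^2/4 \<le> 0" .
  then have "ss * tt * (2 * (ii + b * c - a^2) + 2 * m * D + D^2/4) \<le> 0"
    using s0 t0 by (simp add: mult_nonneg_nonpos)
  then show ?thesis using fin by linarith
qed




lemma ortho_bessel:
  fixes w e1 e2 :: "'a::real_inner"
  assumes o: "inner e1 e2 = 0" and n: "norm e2 = norm e1"
  shows "(inner w e1)^2 + (inner w e2)^2 \<le> norm w^2 * norm e1^2"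
proof (cases "e1 = 0")
  case True
  then have "e2 = 0" using n by simp
  then show ?thesis using True by simp
next
  case False
  define k where "k = norm e1^2"
  define p where "p = inner w e1"
  define q where "q = inner w e2"
  have k0: "k > 0" using False unfolding k_def by simp
  have e11: "inner e1 e1 = k" unfolding k_def by (simp add: power2_norm_eq_inner)
  have e22: "inner e2 e2 = k" unfolding k_def using n by (simp add: power2_norm_eq_inner[symmetric])
  have e21: "inner e2 e1 = 0" using o by (simp add: inner_commute)
  have ww: "inner w w = norm w^2" by (simp add: power2_norm_eq_inner)
  define v where "v = k *\<^sub>R w - p *\<^sub>R e1 - q *\<^sub>R e2"
  have "inner v v = k*k*inner w w - 2*k*p*inner w e1 - 2*k*q*inner w e2 + p*p*inner e1 e1 + q*q*inner e2 e2 + 2*p*q*inner e1 e2"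
    unfolding v_def by (simp add: inner_diff_left inner_diff_right inner_commute algebra_simps)
  also have "\<dots> = k * (k*norm w^2 - p^2 - q^2)"
    unfolding e11 e22 o ww p_def[symmetric] q_def[symmetric] by (simp add: power2_eq_square algebra_simps)
  finally have "0 \<le> k * (k*norm w^2 - p^2 - q^2)" by (metis inner_ge_zero)
  then have "0 \<le> k*norm w^2 - p^2 - q^2" using k0 by (simp add: zero_le_mult_iff)
  then show ?thesis unfolding p_def q_def k_def by (simp add: algebra_simps)
qed

lemma CS_heis:
  fixes x y x' y' :: "real^'n::finite"
  shows "(x \<bullet> x' + y \<bullet> y')^2 + 4 * ((1/2) * (x \<bullet> y' - y \<bullet> x'))^2
     \<le> (norm x^2 + norm y^2) * (norm x'^2 + norm y'^2)"
proof -
  have "(inner (x,y) (x',y'))^2 + (inner (x,y) (y', -x'))^2 \<le> norm (x,y)^2 * norm (x',y')^2"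
    by (rule ortho_bessel) (simp_all add: inner_commute norm_Pair add.commute)
  then show ?thesis by (simp add: norm_Pair power_mult_distrib power2_eq_square algebra_simps)
qed

lemma norm_comb:
  fixes x x' :: "'a::real_inner"
  shows "norm (s *\<^sub>R x + t *\<^sub>R x')^2 = s^2 * norm x^2 + t^2 * norm x'^2 + 2 * s * t * (x \<bullet> x')"
  unfolding power2_norm_eq_inner by (simp add: inner_add_left inner_add_right inner_commute power2_eq_square algebra_simps)

lemma key:
  fixes P Q :: "'n::finite heis"
  assumes P: "P \<in> cball 0 a" and Q: "Q \<in> cball 0 a" and a0: "0 < a" and a2: "a \<le> 2"
    and s0: "s \<ge> 0" and t0: "t \<ge> 0" and st: "s + t = 1"
  shows "hmult (hdil s P) (hdil t Q) \<in> cball 0 a"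
proof -
  obtain x y b where Pd: "P = (x,y,b)" by (cases P) auto
  obtain x' y' c where Qd: "Q = (x',y',c)" by (cases Q) auto
  define A where "A = norm x^2 + norm y^2"
  define A' where "A' = norm x'^2 + norm y'^2"
  define ii where "ii = x \<bullet> x' + y \<bullet> y'"
  define ww where "ww = (1/2) * (x \<bullet> y' - y \<bullet> x')"
  have h1: "A + b^2 \<le> a^2" using P a0 unfolding Pd A_def
    by (simp add: abs_le_square_iff[symmetric] norm_heis2[symmetric])
  have h2: "A' + c^2 \<le> a^2" using Q a0 unfolding Qd A'_def
    by (simp add: abs_le_square_iff[symmetric] norm_heis2[symmetric])
  have CS: "ii^2 + 4 * ww^2 \<le> A * A'" unfolding ii_def ww_def A_def A'_def by (rule CS_heis)
  have main: "s^2 * A + t^2 * A' + 2 * s * t * ii + (s^2 * b + t^2 * c + s * t * ww)^2 \<le> a^2"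
    by (rule scal[OF _ _ CS h1 h2 a0 a2 s0 t0 st]) (simp_all add: A_def A'_def)
  have "norm (hmult (hdil s P) (hdil t Q))^2 = s^2 * A + t^2 * A' + 2 * s * t * ii + (s^2 * b + t^2 * c + s * t * ww)^2"
    unfolding Pd Qd hdil_simp hmult_simp norm_heis2 norm_comb A_def A'_def ii_def ww_def
    by (simp add: power2_eq_square algebra_simps)
  then have "norm (hmult (hdil s P) (hdil t Q))^2 \<le> a^2" using main by simp
  then show ?thesis using a0 by (simp add: abs_le_square_iff[symmetric])
qed




lemma Nh_char2:
  assumes r: "r > 0" and a: "a > 0"
  shows "Nh a p \<le> r \<longleftrightarrow> hdil (1/r) p \<in> cball 0 a"
proof -
  obtain x y z where p: "p = (x,y,z)" by (cases p) auto
  show ?thesis unfolding p using Nh_char[OF r a, of x y z] cball_char[OF r a, of x y z] by blast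
qed

lemma Nh_nonneg: "Nh a p \<ge> 0"
  by (cases p) (simp add: Nh_def)

lemma Nh_zero:
  assumes a: "a > 0"
  shows "Nh a p = 0 \<longleftrightarrow> p = (0,0,0)"
proof -
  obtain x y z where p: "p = (x,y,z)" by (cases p) auto
  define A where "A = norm x^2 + norm y^2"
  have A0: "A \<ge> 0" unfolding A_def by simp
  have "Nh a p = 0 \<longleftrightarrow> (A + sqrt (A^2 + 4*a^2*z^2)) / (2*a^2) = 0"
    unfolding p Nh_def A_def by simp
  also have "\<dots> \<longleftrightarrow> A + sqrt (A^2 + 4*a^2*z^2) = 0" using a by simp
  also have "\<dots> \<longleftrightarrow> A = 0 \<and> z = 0"
  proof
    assume h: "A + sqrt (A^2 + 4*a^2*z^2) = 0"
    have "sqrt (A^2 + 4*a^2*z^2) \<ge> 0" by simp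
    then have "A = 0" "sqrt (A^2 + 4*a^2*z^2) = 0" using h A0 by linarith+
    then show "A = 0 \<and> z = 0" using a by simp
  qed simp
  also have "\<dots> \<longleftrightarrow> p = (0,0,0)" unfolding A_def p
    by (simp add: add_nonneg_eq_0_iff)
  finally show ?thesis .
qed

lemma eq_by_le:
  fixes X Y :: real
  assumes "X \<ge> 0" "Y \<ge> 0" and h: "\<And>r. r > 0 \<Longrightarrow> X \<le> r \<longleftrightarrow> Y \<le> r"
  shows "X = Y"
proof (rule ccontr)
  assume "X \<noteq> Y"
  then consider "X < Y" | "Y < X" by linarith
  then show False
  proof cases
    case 1
    then show False using h[of "(X+Y)/2"] assms by auto
  next
    case 2
    then show False using h[of "(X+Y)/2"] assms by auto
  qed
qed

lemma Nh_hdil: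
  assumes a: "a > 0" and l: "l > 0"
  shows "Nh a (hdil l p) = l * Nh a p"
proof (rule eq_by_le)
  show "0 \<le> Nh a (hdil l p)" by (rule Nh_nonneg)
  show "0 \<le> l * Nh a p" using l Nh_nonneg[of a p] by simp
  fix r :: real assume r: "r > 0"
  have "Nh a (hdil l p) \<le> r \<longleftrightarrow> hdil (1/r) (hdil l p) \<in> cball 0 a" by (rule Nh_char2[OF r a])
  also have "hdil (1/r) (hdil l p) = hdil (1/(r/l)) p" using l by (simp add: hdil_hdil)
  also have "\<dots> \<in> cball 0 a \<longleftrightarrow> Nh a p \<le> r/l" using r l a by (intro Nh_char2[symmetric]) auto
  also have "\<dots> \<longleftrightarrow> l * Nh a p \<le> r" using l by (simp add: pos_le_divide_eq mult.commute)
  finally show "Nh a (hdil l p) \<le> r \<longleftrightarrow> l * Nh a p \<le> r" .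
qed

lemma Nh_hinv: "Nh a (hinv p) = Nh a p"
  by (cases p) (simp add: Nh_def hinv_simp)

lemma hmult_0_left: "hmult (0,0,0) q = q"
  by (cases q) (simp add: hmult_simp)

lemma Nh_tri:
  assumes a0: "a > 0" and a2: "a \<le> 2"
  shows "Nh a (hmult p q) \<le> Nh a p + Nh a q"
proof (cases "Nh a p = 0 \<or> Nh a q = 0")
  case True
  then show ?thesis
  proof
    assume "Nh a p = 0"
    then have "p = (0,0,0)" using Nh_zero[OF a0] by blast
    then show ?thesis using \<open>Nh a p = 0\<close> by (simp add: hmult_0_left)
  next
    assume "Nh a q = 0"
    then have "q = (0,0,0)" using Nh_zero[OF a0] by blast
    moreover have "hmult p (0,0,0) = p" by (cases p) (simp add: hmult_simp)
    ultimately show ?thesis using \<open>Nh a q = 0\<close> by simp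
  qed
next
  case False
  define sp where "sp = Nh a p"
  define sq where "sq = Nh a q"
  have sp0: "sp > 0" using False Nh_nonneg[of a p] unfolding sp_def by linarith
  have sq0: "sq > 0" using False Nh_nonneg[of a q] unfolding sq_def by linarith
  define R where "R = sp + sq"
  have R0: "R > 0" using sp0 sq0 unfolding R_def by simp
  define P where "P = hdil (1/sp) p"
  define Q where "Q = hdil (1/sq) q"
  have P: "P \<in> cball 0 a" unfolding P_def using Nh_char2[OF sp0 a0, of p] sp_def by simp
  have Q: "Q \<in> cball 0 a" unfolding Q_def using Nh_char2[OF sq0 a0, of q] sq_def by simp
  have "hmult (hdil (sp/R) P) (hdil (sq/R) Q) \<in> cball 0 a"
    by (rule key[OF P Q a0 a2]) (use sp0 sq0 R0 in \<open>auto simp: R_def add_divide_distrib[symmetric]\<close>)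
  moreover have "hmult (hdil (sp/R) P) (hdil (sq/R) Q) = hdil (1/R) (hmult p q)"
    unfolding P_def Q_def hdil_hdil hdil_mult using sp0 sq0 by simp
  ultimately have "hdil (1/R) (hmult p q) \<in> cball 0 a" by simp
  then have "Nh a (hmult p q) \<le> R" using Nh_char2[OF R0 a0, of "hmult p q"] by blast
  then show ?thesis unfolding R_def sp_def sq_def .
qed

lemma Inf_ray:
  fixes G :: real
  assumes "G \<ge> 0"
  shows "Inf {r. r > 0 \<and> G \<le> r} = G"
proof (cases "G = 0")
  case True
  then have "{r. r > 0 \<and> G \<le> r} = {0<..}" by auto
  then show ?thesis using True by simp
next
  case False
  then have "{r. r > 0 \<and> G \<le> r} = {G..}" using assms by auto
  then show ?thesis by simp
qed

lemma d_eq: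
  assumes a: "a > 0"
  shows "d_alpha a p q = Nh a (hmult (hinv p) q)"
proof -
  have "{r. r > 0 \<and> hdil (1/r) (hmult (hinv p) q) \<in> cball 0 a} = {r. r > 0 \<and> Nh a (hmult (hinv p) q) \<le> r}"
    using Nh_char2[OF _ a] by blast
  then show ?thesis unfolding d_alpha_def using Inf_ray[OF Nh_nonneg] by simp
qed




lemma Nh_alt: "Nh a = (\<lambda>p. sqrt ((norm (fst p)^2 + norm (fst (snd p))^2 + sqrt ((norm (fst p)^2 + norm (fst (snd p))^2)^2 + 4*a^2*(snd (snd p))^2)) / (2*a^2)))"
  by (rule ext, case_tac p) (simp add: Nh_def)

lemma hmult_alt: "hmult p = (\<lambda>q. (fst p + fst q, fst (snd p) + fst (snd q), snd (snd p) + snd (snd q) + (1/2) * (fst p \<bullet> fst (snd q)) - (1/2) * (fst (snd p) \<bullet> fst q)))"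
  by (rule ext, cases p, case_tac q) (simp add: hmult_simp)

lemma cont_Nh: "continuous_on UNIV (Nh a :: 'n::finite heis \<Rightarrow> real)"
  unfolding Nh_alt divide_inverse by (intro continuous_intros)

lemma cont_hmult: "continuous_on UNIV (hmult (p::'n::finite heis))"
  unfolding hmult_alt by (intro continuous_intros)

lemma cont_f: "continuous (at q) (\<lambda>q. Nh a (hmult (hinv p) q) :: real)"
proof -
  have "continuous_on UNIV (\<lambda>q. Nh a (hmult (hinv p) q))"
    by (rule continuous_on_compose2[OF cont_Nh cont_hmult]) simp
  then show ?thesis by (meson UNIV_I continuous_on_eq_continuous_at open_UNIV)
qed

lemma hmult_hinv_cancel: "hmult p (hmult (hinv p) q) = q"
  by (cases p; cases q) (simp add: hmult_simp hinv_simp inner_commute algebra_simps)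

lemma hmult_zero_right: "hmult p (0,0,0) = p"
  by (cases p) (simp add: hmult_simp)

lemma Nh_small:
  assumes a: "a > 0" and r: "r > 0" "r \<le> 1" and h: "Nh a p \<le> r"
  shows "norm p \<le> a * r"
proof -
  obtain x y z where p: "p = (x,y,z)" by (cases p) auto
  have c: "(norm x^2 + norm y^2) * r^2 + z^2 \<le> a^2 * r^4" using h Nh_char[OF r(1) a, of x y z] p by blast
  have "z^2 * r^2 \<le> z^2" using r by (simp add: mult_left_le power_le_one)
  moreover have "(norm x^2 + norm y^2 + z^2) * r^2 = (norm x^2 + norm y^2) * r^2 + z^2 * r^2"
    by (simp add: algebra_simps)
  moreover have "(a * r)^2 * r^2 = a^2 * r^4" by (simp add: power_mult_distrib flip: power_add)
  ultimately have "(norm x^2 + norm y^2 + z^2) * r^2 \<le> (a * r)^2 * r^2" using c by argo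
  then have "norm x^2 + norm y^2 + z^2 \<le> (a * r)^2" using r by simp
  then have "norm p ^2 \<le> (a*r)^2" unfolding p norm_heis2 .
  moreover have "a * r \<ge> 0" using a r by simp
  ultimately show ?thesis by (rule power2_le_imp_le)
qed

theorem mainTheorem2:
  fixes a :: real
  assumes "0 < a" and "a \<le> 2"
  shows "homogeneous_distance (d_alpha a :: 'n::finite heis \<Rightarrow> 'n heis \<Rightarrow> real)"
proof -
  note a0 = assms(1) and a2 = assms(2)
  have d: "\<And>p q. d_alpha a p q = Nh a (hmult (hinv p) q)" using d_eq[OF a0] .
  have t1: "\<forall>p q::'n heis. d_alpha a p q = 0 \<longleftrightarrow> p = q"
    unfolding d by (intro allI) (simp only: Nh_zero[OF a0] heis_eq0)
  have t2: "\<forall>p q::'n heis. d_alpha a p q = d_alpha a q p"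
  proof (intro allI)
    fix p q :: "'n heis"
    have "Nh a (hmult (hinv p) q) = Nh a (hinv (hmult (hinv p) q))" by (rule Nh_hinv[symmetric])
    also have "\<dots> = Nh a (hmult (hinv q) p)" by (simp only: heis_sym)
    finally show "d_alpha a p q = d_alpha a q p" unfolding d .
  qed
  have t3: "\<forall>p q r::'n heis. d_alpha a p r \<le> d_alpha a p q + d_alpha a q r"
  proof (intro allI)
    fix p q r :: "'n heis"
    have "Nh a (hmult (hinv p) r) = Nh a (hmult (hmult (hinv p) q) (hmult (hinv q) r))"
      by (subst heis_tri[of p r q]) (rule refl)
    also have "\<dots> \<le> Nh a (hmult (hinv p) q) + Nh a (hmult (hinv q) r)" by (rule Nh_tri[OF a0 a2])
    finally show "d_alpha a p r \<le> d_alpha a p q + d_alpha a q r" unfolding d .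
  qed
  have t5: "\<forall>p q q'::'n heis. d_alpha a (hmult p q) (hmult p q') = d_alpha a q q'"
    unfolding d by (simp add: heis_left)
  have t6: "\<forall>l (p::'n heis) q. l > 0 \<longrightarrow> d_alpha a (hdil l p) (hdil l q) = l * d_alpha a p q"
    unfolding d by (simp add: heis_dil Nh_hdil[OF a0])
  have t4: "\<forall>U::'n heis set. open U \<longleftrightarrow> (\<forall>p\<in>U. \<exists>e>0. \<forall>q. d_alpha a p q < e \<longrightarrow> q \<in> U)"
  proof (intro allI iffI ballI)
    fix U :: "'n heis set" and p
    assume U: "open U" and pU: "p \<in> U"
    obtain \<delta> where \<delta>: "\<delta> > 0" "\<And>y. dist y p < \<delta> \<Longrightarrow> y \<in> U" using U pU unfolding open_dist by blast
    have "continuous (at (0,0,0)) (hmult p)"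
      using cont_hmult[of p] by (simp add: continuous_on_eq_continuous_at)
    then obtain \<eta> where \<eta>: "\<eta> > 0" "\<And>h. dist h (0,0,0) < \<eta> \<Longrightarrow> dist (hmult p h) (hmult p (0,0,0)) < \<delta>"
      unfolding continuous_at_eps_delta using \<delta>(1) by blast
    define e where "e = min 1 (\<eta> / (2*a))"
    have e0: "e > 0" "e \<le> 1" unfolding e_def using \<eta> a0 by auto
    show "\<exists>e>0. \<forall>q. d_alpha a p q < e \<longrightarrow> q \<in> U"
    proof (intro exI conjI allI impI)
      show "e > 0" by (rule e0)
      fix q assume "d_alpha a p q < e"
      then have "Nh a (hmult (hinv p) q) \<le> e" unfolding d by simp
      then have "norm (hmult (hinv p) q) \<le> a * e" by (rule Nh_small[OF a0 e0])
      also have "a * e \<le> a * (\<eta> / (2*a))" using a0 unfolding e_def by (intro mult_left_mono) auto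
      also have "\<dots> < \<eta>" using a0 \<eta> by simp
      finally have "norm (hmult (hinv p) q) < \<eta>" .
      moreover have z0: "((0,0,0)::'n heis) = 0" by (simp add: zero_prod_def)
      ultimately have "dist (hmult (hinv p) q) (0,0,0) < \<eta>" by (simp add: dist_norm z0)
      then have "dist (hmult p (hmult (hinv p) q)) (hmult p (0,0,0)) < \<delta>" by (rule \<eta>(2))
      then have "dist q p < \<delta>" by (simp only: hmult_hinv_cancel hmult_zero_right)
      then show "q \<in> U" by (rule \<delta>(2))
    qed
  next
    fix U :: "'n heis set"
    assume H: "\<forall>p\<in>U. \<exists>e>0. \<forall>q. d_alpha a p q < e \<longrightarrow> q \<in> U"
    show "open U" unfolding open_dist
    proof
      fix p assume pU: "p \<in> U"
      obtain e where e: "e > 0" "\<And>q. d_alpha a p q < e \<Longrightarrow> q \<in> U" using H pU by blast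
      obtain \<delta> where \<delta>: "\<delta> > 0" "\<And>q. dist q p < \<delta> \<Longrightarrow> dist (Nh a (hmult (hinv p) q)) (Nh a (hmult (hinv p) p)) < e"
        using cont_f[of p a p] e(1) unfolding continuous_at_eps_delta by blast
      have z: "Nh a (hmult (hinv p) p) = 0" by (simp only: Nh_zero[OF a0] heis_eq0)
      show "\<exists>e>0. \<forall>y. dist y p < e \<longrightarrow> y \<in> U"
      proof (intro exI conjI allI impI)
        show "\<delta> > 0" by (rule \<delta>(1))
        fix q assume "dist q p < \<delta>"
        then have "dist (Nh a (hmult (hinv p) q)) 0 < e" using \<delta>(2) z by simp
        then have "d_alpha a p q < e" unfolding d using Nh_nonneg[of a] by (simp add: dist_real_def)
        then show "q \<in> U" by (rule e(2))
      qed
    qed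
  qed
  show ?thesis unfolding homogeneous_distance_def using t1 t2 t3 t4 t5 t6 by blast
qed



end
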